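(* Let $G=(V,E)$ be a simple undirected graph with node features $x_v\in\mathbb{R}$, $v\in V$, and consider the message passing neural network defined by $h_v^{(0)}=x_v$ and, for $\ell\ge 0$, $$h_v^{(\ell+1)}=\phi_\ell\Big(h_v^{(\ell)},\ \sum_{u\in V}\hat a_{vu}\,\psi_\ell\big(h_v^{(\ell)},h_u^{(\ell)}\big)\Big),$$ where $\phi_\ell,\psi_\ell:\mathbb{R}^2\to\mathbb{R}$ are differentiable. Let $i,s\in V$ with $s\in S_{r+1}(i)$ for some integer $r\ge 0$. If $|\nabla\phi_\ell|\le\alpha$ and $|\nabla\psi_\ell|\le\beta$ (i.e. all partial derivatives are bounded in absolute value by $\alpha$, resp. $\beta$) for all $0\le\ell\le r$, then $$\left|\frac{\partial h_i^{(r+1)}}{\partial x_s}\right|\le(\alpha\beta)^{r+1}\big(\hat A^{r+1}\big)_{is}.$$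
   Context: $A$ is the adjacency matrix of $G$, $D$ the diagonal degree matrix, and $\hat A=(\hat a_{uv})=(D+I)^{-1/2}(A+I)(D+I)^{-1/2}$ is the normalized augmented adjacency matrix. $d_G$ is the shortest-path distance and $S_r(i)=\{v\in V: d_G(i,v)=r\}$. *)

theory Defs
  imports "HOL-Analysis.Analysis"
begin

text \<open>Simple undirected graph on a finite vertex type 'v, given by an edge relation E
  (assumed symmetric and irreflexive in the theorem).\<close>

definition degree :: "('v::finite \<Rightarrow> 'v \<Rightarrow> bool) \<Rightarrow> 'v \<Rightarrow> nat" where
  "degree E v = card {u. E v u}"

text \<open>Normalized augmented adjacency matrix (D+I)^(-1/2) (A+I) (D+I)^(-1/2).\<close>
definition adj_hat :: "('v::finite \<Rightarrow> 'v \<Rightarrow> bool) \<Rightarrow> real^'v^'v" where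
  "adj_hat E = (\<chi> u v. ((if E u v then 1 else 0) + (if u = v then 1 else 0))
       / (sqrt (real (degree E u) + 1) * sqrt (real (degree E v) + 1)))"

definition matpow :: "real^'n^'n \<Rightarrow> nat \<Rightarrow> real^'n^'n" where
  "matpow M n = (((**) M) ^^ n) (mat 1)"

fun walk :: "('v \<Rightarrow> 'v \<Rightarrow> bool) \<Rightarrow> nat \<Rightarrow> 'v \<Rightarrow> 'v \<Rightarrow> bool" where
  "walk E 0 u v = (u = v)"
| "walk E (Suc n) u v = (\<exists>w. E u w \<and> walk E n w v)"

definition sphere_G :: "('v \<Rightarrow> 'v \<Rightarrow> bool) \<Rightarrow> nat \<Rightarrow> 'v \<Rightarrow> 'v set" where
  "sphere_G E r i = {v. (\<exists>n. walk E n i v) \<and> (LEAST n. walk E n i v) = r}"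

fun mpnn :: "(nat \<Rightarrow> real \<Rightarrow> real \<Rightarrow> real) \<Rightarrow> (nat \<Rightarrow> real \<Rightarrow> real \<Rightarrow> real)
    \<Rightarrow> real^'v^'v \<Rightarrow> nat \<Rightarrow> ('v::finite \<Rightarrow> real) \<Rightarrow> 'v \<Rightarrow> real" where
  "mpnn phi psi M 0 x v = x v"
| "mpnn phi psi M (Suc l) x v =
     phi l (mpnn phi psi M l x v)
       (\<Sum>u\<in>UNIV. M $ v $ u * psi l (mpnn phi psi M l x v) (mpnn phi psi M l x u))"

end

theory Submission
  imports Defs
begin

lemma pair_chain:
  fixes f :: "real \<Rightarrow> real \<Rightarrow> real"
  assumes fd: "\<And>p. (\<lambda>(a, b). f a b) differentiable (at p)"
    and g1: "(g1 has_real_derivative d1) (at t0)"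
    and g2: "(g2 has_real_derivative d2) (at t0)"
  shows "((\<lambda>t. f (g1 t) (g2 t)) has_real_derivative
     (deriv (\<lambda>a. f a (g2 t0)) (g1 t0) * d1 + deriv (\<lambda>b. f (g1 t0) b) (g2 t0) * d2)) (at t0)"
proof -
  let ?F = "\<lambda>(a, b). f a b"
  obtain P where P: "(?F has_derivative P) (at (g1 t0, g2 t0))"
    using fd[of "(g1 t0, g2 t0)"] unfolding differentiable_def by blast
  have lin: "linear P" using P has_derivative_linear by blast
  have P1: "P (a, 0) = a * P (1, 0)" for a
    using linear_scale[OF lin, of a "(1::real,0::real)"] by simp
  have P2: "P (0, b) = b * P (0, 1)" for b
    using linear_scale[OF lin, of b "(0::real,1::real)"] by simp
  have Pdec: "P (a, b) = a * P (1, 0) + b * P (0, 1)" for a b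
  proof -
    have "(a, b) = (a, 0) + (0::real, b)" by simp
    hence "P (a, b) = P (a, 0) + P (0, b)" by (metis lin linear_add)
    thus ?thesis using P1[of a] P2[of b] by linarith
  qed
  have E1: "(\<lambda>h. P (h, 0)) = (*) (P (1, 0))" by (rule ext, rule trans[OF P1], rule mult.commute)
  have E2: "(\<lambda>h. P (0, h)) = (*) (P (0, 1))" by (rule ext, rule trans[OF P2], rule mult.commute)
  have E3: "(\<lambda>h. P (d1 * h, d2 * h)) = (*) (P (1, 0) * d1 + P (0, 1) * d2)"
    by (rule ext, rule trans[OF Pdec], simp add: algebra_simps)
  have d1: "deriv (\<lambda>a. f a (g2 t0)) (g1 t0) = P (1, 0)"
  proof (rule DERIV_imp_deriv)
    have "((\<lambda>a. (a, g2 t0)) has_derivative (\<lambda>h. (h, 0))) (at (g1 t0))"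
      by (auto intro!: derivative_eq_intros)
    from has_derivative_compose[OF this P]
    have "((\<lambda>a. f a (g2 t0)) has_derivative (\<lambda>h. P (h, 0))) (at (g1 t0))" by simp
    thus "((\<lambda>a. f a (g2 t0)) has_real_derivative P (1, 0)) (at (g1 t0))"
      unfolding has_field_derivative_def E1 E2 by simp
  qed
  have d2: "deriv (\<lambda>b. f (g1 t0) b) (g2 t0) = P (0, 1)"
  proof (rule DERIV_imp_deriv)
    have "((\<lambda>b. (g1 t0, b)) has_derivative (\<lambda>h. (0, h))) (at (g2 t0))"
      by (auto intro!: derivative_eq_intros)
    from has_derivative_compose[OF this P]
    have "((\<lambda>b. f (g1 t0) b) has_derivative (\<lambda>h. P (0, h))) (at (g2 t0))" by simp
    thus "((\<lambda>b. f (g1 t0) b) has_real_derivative P (0, 1)) (at (g2 t0))"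
      unfolding has_field_derivative_def E1 E2 by simp
  qed
  have "((\<lambda>t. (g1 t, g2 t)) has_derivative (\<lambda>h. (d1 * h, d2 * h))) (at t0)"
    using g1 g2 unfolding has_field_derivative_def
    by (intro has_derivative_Pair)
  from has_derivative_compose[OF this P]
  have "((\<lambda>t. f (g1 t) (g2 t)) has_derivative (\<lambda>h. P (d1 * h, d2 * h))) (at t0)" by simp
  thus ?thesis unfolding has_field_derivative_def d1 d2 E3 .
qed


theorem lemma1:
  fixes E :: "'v::finite \<Rightarrow> 'v \<Rightarrow> bool"
    and phi psi :: "nat \<Rightarrow> real \<Rightarrow> real \<Rightarrow> real"
    and x :: "'v \<Rightarrow> real" and i s :: 'v and r :: nat and \<alpha> \<beta> :: real
  assumes sym: "\<And>u v. E u v \<Longrightarrow> E v u"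
    and irrefl: "\<And>v. \<not> E v v"
    and phi_diff: "\<And>l p. (\<lambda>(a, b). phi l a b) differentiable (at p)"
    and psi_diff: "\<And>l p. (\<lambda>(a, b). psi l a b) differentiable (at p)"
    and s_sphere: "s \<in> sphere_G E (r + 1) i"
    and phi_bound: "\<And>l a b. l \<le> r \<Longrightarrow>
        \<bar>deriv (\<lambda>t. phi l t b) a\<bar> \<le> \<alpha> \<and> \<bar>deriv (\<lambda>t. phi l a t) b\<bar> \<le> \<alpha>"
    and psi_bound: "\<And>l a b. l \<le> r \<Longrightarrow>
        \<bar>deriv (\<lambda>t. psi l t b) a\<bar> \<le> \<beta> \<and> \<bar>deriv (\<lambda>t. psi l a t) b\<bar> \<le> \<beta>"
  shows "\<bar>deriv (\<lambda>t. mpnn phi psi (adj_hat E) (r + 1) (x(s := t)) i) (x s)\<bar>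
           \<le> (\<alpha> * \<beta>) ^ (r + 1) * (matpow (adj_hat E) (r + 1)) $ i $ s"
proof -
  define M where "M = adj_hat E"
  define t0 where "t0 = x s"
  define h where "h l t v = mpnn phi psi M l (x(s:=t)) v" for l t v
  define D where "D l v = deriv (\<lambda>t. h l t v) t0" for l v
  define S where "S l t v = (\<Sum>u\<in>UNIV. M$v$u * psi l (h l t v) (h l t u))" for l t v
  have hsuc: "h (Suc l) t v = phi l (h l t v) (S l t v)" for l t v
    by (simp add: h_def S_def)
  have Mnz: "M$v$u \<noteq> 0 \<Longrightarrow> E v u \<or> u = v" for v u
    by (auto simp: M_def adj_hat_def split: if_splits)
  have Mge: "M$v$u \<ge> 0" for v u
    by (auto simp: M_def adj_hat_def)
  have step: "((\<lambda>t. h (Suc l) t v) has_real_derivative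
      (deriv (\<lambda>a. phi l a (S l t0 v)) (h l t0 v) * D l v
       + deriv (\<lambda>b. phi l (h l t0 v) b) (S l t0 v) *
         (\<Sum>u\<in>UNIV. M$v$u * (deriv (\<lambda>a. psi l a (h l t0 u)) (h l t0 v) * D l v
              + deriv (\<lambda>b. psi l (h l t0 v) b) (h l t0 u) * D l u)))) (at t0)"
    if H: "\<forall>v. ((\<lambda>t. h l t v) has_real_derivative D l v) (at t0)" for l v
  proof -
    have Sd: "((\<lambda>t. S l t v) has_real_derivative
       (\<Sum>u\<in>UNIV. M$v$u * (deriv (\<lambda>a. psi l a (h l t0 u)) (h l t0 v) * D l v
              + deriv (\<lambda>b. psi l (h l t0 v) b) (h l t0 u) * D l u))) (at t0)"
      unfolding S_def
      by (intro DERIV_sum DERIV_cmult pair_chain[where f="psi l"] psi_diff H[rule_format])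
    show ?thesis unfolding hsuc
      by (rule pair_chain[where f="phi l", OF phi_diff H[rule_format] Sd])
  qed
  have HD: "\<forall>v. ((\<lambda>t. h l t v) has_real_derivative D l v) (at t0)" for l
  proof (induction l)
    case 0
    show ?case
    proof
      fix v
      have e: "(\<lambda>t. h 0 t v) = (if v = s then (\<lambda>t. t) else (\<lambda>t. x v))"
        by (auto simp: h_def fun_eq_iff)
      have d: "((\<lambda>t. h 0 t v) has_real_derivative (if v = s then 1 else 0)) (at t0)"
        unfolding e by (auto intro!: derivative_eq_intros)
      thus "((\<lambda>t. h 0 t v) has_real_derivative D 0 v) (at t0)"
        unfolding D_def using DERIV_imp_deriv[OF d] by simp
    qed
  next
    case (Suc l)
    show ?case
    proof
      fix v
      from step[OF Suc] obtain d where d: "((\<lambda>t. h (Suc l) t v) has_real_derivative d) (at t0)" by blast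
      thus "((\<lambda>t. h (Suc l) t v) has_real_derivative D (Suc l) v) (at t0)"
        unfolding D_def using DERIV_imp_deriv[OF d] by simp
    qed
  qed
  have Dsuc: "D (Suc l) v =
      deriv (\<lambda>a. phi l a (S l t0 v)) (h l t0 v) * D l v
       + deriv (\<lambda>b. phi l (h l t0 v) b) (S l t0 v) *
         (\<Sum>u\<in>UNIV. M$v$u * (deriv (\<lambda>a. psi l a (h l t0 u)) (h l t0 v) * D l v
              + deriv (\<lambda>b. psi l (h l t0 v) b) (h l t0 u) * D l u))" for l v
    unfolding D_def[of "Suc l"] by (rule DERIV_imp_deriv[OF step[OF HD]])
  have const: "\<forall>v t. \<not>(\<exists>n\<le>l. walk E n v s) \<longrightarrow> h l t v = h l t0 v" for l
  proof (induction l)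
    case 0
    show ?case by (auto simp: h_def)
  next
    case (Suc l)
    show ?case
    proof (intro allI impI)
      fix v t
      assume nw: "\<not>(\<exists>n\<le>Suc l. walk E n v s)"
      have nv: "\<not>(\<exists>n\<le>l. walk E n v s)" using nw by auto
      have nu: "\<not>(\<exists>n\<le>l. walk E n u s)" if "E v u" for u
      proof
        assume "\<exists>n\<le>l. walk E n u s"
        then obtain n where "n \<le> l" "walk E n u s" by blast
        hence "walk E (Suc n) v s" using that by auto
        thus False using nw \<open>n \<le> l\<close> by (meson Suc_le_mono)
      qed
      have "S l t v = S l t0 v" unfolding S_def
      proof (rule sum.cong[OF refl])
        fix u
        show "M$v$u * psi l (h l t v) (h l t u) = M$v$u * psi l (h l t0 v) (h l t0 u)"
        proof (cases "M$v$u = 0")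
          case False
          hence "E v u \<or> u = v" using Mnz by blast
          hence "h l t u = h l t0 u" using Suc.IH nu nv by blast
          moreover have "h l t v = h l t0 v" using Suc.IH nv by blast
          ultimately show ?thesis by simp
        qed simp
      qed
      moreover have "h l t v = h l t0 v" using Suc.IH nv by blast
      ultimately show "h (Suc l) t v = h (Suc l) t0 v" by (simp add: hsuc)
    qed
  qed
  have D0: "D l v = 0" if "\<not>(\<exists>n\<le>l. walk E n v s)" for l v
  proof -
    have "(\<lambda>t. h l t v) = (\<lambda>t. h l t0 v)" using const that by blast
    thus ?thesis unfolding D_def by simp
  qed
  have bge: "\<beta> \<ge> 0" using psi_bound[of 0 0 0] by linarith
  have mp: "matpow M (Suc l) = M ** matpow M l" for l by (simp add: matpow_def)
  have bound: "l \<le> r + 1 \<Longrightarrow> \<forall>v. \<not>(\<exists>n<l. walk E n v s) \<longrightarrow>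
      \<bar>D l v\<bar> \<le> (\<alpha>*\<beta>)^l * matpow M l $ v $ s" for l
  proof (induction l)
    case 0
    have "D 0 v = (if v = s then 1 else 0)" for v
      using DERIV_imp_deriv[OF HD[rule_format, of 0 v]] HD
    proof -
      have e: "(\<lambda>t. h 0 t v) = (if v = s then (\<lambda>t. t) else (\<lambda>t. x v))"
        by (auto simp: h_def fun_eq_iff)
      show ?thesis unfolding D_def e by auto
    qed
    thus ?case by (auto simp: matpow_def mat_def)
  next
    case (Suc l)
    hence lr: "l \<le> r" by simp
    show ?case
    proof (intro allI impI)
      fix v
      assume nw: "\<not>(\<exists>n<Suc l. walk E n v s)"
      have nv: "\<not>(\<exists>n\<le>l. walk E n v s)" using nw by auto
      have Dv: "D l v = 0" using D0 nv by blast
      let ?B = "\<lambda>u. M$v$u * (\<beta> * ((\<alpha>*\<beta>)^l * matpow M l $ u $ s))"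
      have trm: "\<bar>M$v$u * (deriv (\<lambda>a. psi l a (h l t0 u)) (h l t0 v) * D l v
              + deriv (\<lambda>b. psi l (h l t0 v) b) (h l t0 u) * D l u)\<bar> \<le> ?B u" for u
      proof (cases "M$v$u = 0")
        case False
        hence "E v u \<or> u = v" using Mnz by blast
        hence nu: "\<not>(\<exists>n<l. walk E n u s)"
        proof
          assume "E v u"
          show ?thesis
          proof
            assume "\<exists>n<l. walk E n u s"
            then obtain n where "n < l" "walk E n u s" by blast
            hence "walk E (Suc n) v s" using \<open>E v u\<close> by auto
            thus False using nv \<open>n < l\<close> by (meson Suc_leI)
          qed
        next
          assume "u = v" thus ?thesis using nv by auto
        qed
        have ih: "\<bar>D l u\<bar> \<le> (\<alpha>*\<beta>)^l * matpow M l $ u $ s"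
          using Suc.IH Suc.prems nu by simp
        have pb: "\<bar>deriv (\<lambda>b. psi l (h l t0 v) b) (h l t0 u)\<bar> \<le> \<beta>"
          using psi_bound[OF lr] by blast
        have "\<bar>deriv (\<lambda>b. psi l (h l t0 v) b) (h l t0 u) * D l u\<bar> \<le> \<beta> * ((\<alpha>*\<beta>)^l * matpow M l $ u $ s)"
          unfolding abs_mult by (rule mult_mono[OF pb ih bge]) simp
        thus ?thesis using Mge[of v u] by (simp add: Dv abs_mult mult_left_mono)
      qed simp
      have "\<bar>\<Sum>u\<in>UNIV. M$v$u * (deriv (\<lambda>a. psi l a (h l t0 u)) (h l t0 v) * D l v
              + deriv (\<lambda>b. psi l (h l t0 v) b) (h l t0 u) * D l u)\<bar> \<le> (\<Sum>u\<in>UNIV. ?B u)"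
        by (rule order_trans[OF sum_abs sum_mono[OF trm]])
      also have "(\<Sum>u\<in>UNIV. ?B u) = \<beta> * (\<alpha>*\<beta>)^l * matpow M (Suc l) $ v $ s"
        by (simp add: mp matrix_matrix_mult_def sum_distrib_left algebra_simps)
      finally have sb: "\<bar>\<Sum>u\<in>UNIV. M$v$u * (deriv (\<lambda>a. psi l a (h l t0 u)) (h l t0 v) * D l v
              + deriv (\<lambda>b. psi l (h l t0 v) b) (h l t0 u) * D l u)\<bar> \<le> \<beta> * (\<alpha>*\<beta>)^l * matpow M (Suc l) $ v $ s" .
      have pa: "\<bar>deriv (\<lambda>b. phi l (h l t0 v) b) (S l t0 v)\<bar> \<le> \<alpha>"
        using phi_bound[OF lr] by blast
      have "\<bar>D (Suc l) v\<bar> \<le> \<alpha> * (\<beta> * (\<alpha>*\<beta>)^l * matpow M (Suc l) $ v $ s)"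
      proof -
        have "D (Suc l) v = deriv (\<lambda>b. phi l (h l t0 v) b) (S l t0 v) *
          (\<Sum>u\<in>UNIV. M$v$u * (deriv (\<lambda>a. psi l a (h l t0 u)) (h l t0 v) * D l v
              + deriv (\<lambda>b. psi l (h l t0 v) b) (h l t0 u) * D l u))"
          by (simp add: Dsuc Dv)
        hence "\<bar>D (Suc l) v\<bar> = \<bar>deriv (\<lambda>b. phi l (h l t0 v) b) (S l t0 v)\<bar> *
          \<bar>\<Sum>u\<in>UNIV. M$v$u * (deriv (\<lambda>a. psi l a (h l t0 u)) (h l t0 v) * D l v
              + deriv (\<lambda>b. psi l (h l t0 v) b) (h l t0 u) * D l u)\<bar>"
          by (simp only: abs_mult)
        also have "\<dots> \<le> \<alpha> * (\<beta> * (\<alpha>*\<beta>)^l * matpow M (Suc l) $ v $ s)"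
          by (rule mult_mono[OF pa sb]) (use pa in auto)
        finally show ?thesis .
      qed
      thus "\<bar>D (Suc l) v\<bar> \<le> (\<alpha>*\<beta>)^Suc l * matpow M (Suc l) $ v $ s"
        by (simp add: algebra_simps)
    qed
  qed
  have ni: "\<not>(\<exists>n<r+1. walk E n i s)"
    using s_sphere unfolding sphere_G_def by (metis (mono_tags, lifting) Suc_eq_plus1 mem_Collect_eq not_less_Least)
  have "\<bar>D (r+1) i\<bar> \<le> (\<alpha>*\<beta>)^(r+1) * matpow M (r+1) $ i $ s"
    using bound[of "r+1"] ni by blast
  thus ?thesis by (simp add: D_def h_def M_def t0_def)
qed

end
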